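(* Let $\gamma>0$ and let $\mathcal H$ be a family of real random variables. The family $\{e^{\gamma X}: X\in\mathcal H\}$ is uniformly integrable if and only if there exists a function $k:\mathbb R_+\to\mathbb R_+$ with $k(x)\to+\infty$ as $x\to+\infty$ such that $$\sup_{X\in\mathcal H}\mathbb E[K(X^+)]<+\infty,\qquad K(x)=\int_0^x k(t)e^{\gamma t}\,dt.$$ Moreover, in this case $k$ can be chosen to be $C^\infty$ with $k(0)=\gamma$ and $k'(x)>0$ for all $x\in\mathbb R_+$.
   Context: $X^+=\max(X,0)$. *)

theory Defs
  imports "HOL-Probability.Probability"
begin

text \<open>Expectations are taken as nonnegative (extended-valued) integrals, so no
  separate integrability side condition is lost.\<close>
definition unif_integrable :: "'a measure \<Rightarrow> ('a \<Rightarrow> real) set \<Rightarrow> bool" where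
  "unif_integrable M F \<longleftrightarrow>
     ((\<lambda>c::real. SUP f\<in>F. \<integral>\<^sup>+ \<omega>. ennreal \<bar>f \<omega>\<bar> * indicator {\<omega>. \<bar>f \<omega>\<bar> > c} \<omega> \<partial>M)
        \<longlongrightarrow> 0) at_top"

text \<open>k is C-infinity on [0,\<infinity>): there is a sequence of functions d with d 0 = k
  on [0,\<infinity>) and d (Suc n) the (one-sided at 0) derivative of d n on [0,\<infinity>).\<close>
definition smooth_on_nonneg :: "(real \<Rightarrow> real) \<Rightarrow> (nat \<Rightarrow> real \<Rightarrow> real) \<Rightarrow> bool" where
  "smooth_on_nonneg k d \<longleftrightarrow>
     (\<forall>x\<ge>0. d 0 x = k x) \<and>
     (\<forall>n. \<forall>x\<ge>0. (d n has_real_derivative d (Suc n) x) (at x within {0..}))"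

definition Kfun :: "real \<Rightarrow> (real \<Rightarrow> real) \<Rightarrow> real \<Rightarrow> ennreal" where
  "Kfun \<gamma> k x = (\<integral>\<^sup>+ t\<in>{0..x}. ennreal (k t * exp (\<gamma> * t)) \<partial>lborel)"

definition admissible_k :: "'a measure \<Rightarrow> ('a \<Rightarrow> real) set \<Rightarrow> real \<Rightarrow> (real \<Rightarrow> real) \<Rightarrow> bool" where
  "admissible_k M H \<gamma> k \<longleftrightarrow>
     k \<in> borel_measurable borel \<and> (\<forall>x\<ge>0. k x \<ge> 0) \<and>
     filterlim k at_top at_top \<and>
     (SUP X\<in>H. \<integral>\<^sup>+ \<omega>. Kfun \<gamma> k (max (X \<omega>) 0) \<partial>M) < \<infinity>"

end

theory Submission
  imports Defs
begin


lemma series_deriv: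
  fixes g g' :: "nat \<Rightarrow> real \<Rightarrow> real" and Mb :: "nat \<Rightarrow> real"
  assumes d: "\<And>j x. x \<ge> 0 \<Longrightarrow> (g j has_real_derivative g' j x) (at x within {0..})"
    and b: "\<And>j x. x \<ge> 0 \<Longrightarrow> \<bar>g' j x\<bar> \<le> Mb j" and sM: "summable Mb"
    and s0: "summable (\<lambda>j. g j 0)" and x: "x \<ge> 0"
  shows "((\<lambda>x. \<Sum>j. g j x) has_real_derivative (\<Sum>j. g' j x)) (at x within {0..})"
proof -
  have ul: "uniform_limit {0..} (\<lambda>n x. \<Sum>i<n. g' i x) (\<lambda>x. \<Sum>i. g' i x) sequentially"
    by (rule Weierstrass_m_test_ev[OF _ sM]) (use b in auto)
  obtain G where G: "\<forall>x\<in>{0..}. (\<lambda>n. g n x) sums G x \<and> (G has_field_derivative (\<Sum>i. g' i x)) (at x within {0..})"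
    using has_field_derivative_series[of "{0..}" g g', OF convex_real_interval(1) _ ul _ s0] d by force
  have "(G has_field_derivative (\<Sum>i. g' i x)) (at x within {0..})" using G x by auto
  then show ?thesis
    by (rule has_field_derivative_transform_within[where d=1]) (use G x sums_unique in auto)
qed

lemma summable_a_bound:
  fixes f :: "nat \<Rightarrow> real"
  assumes "\<And>j. \<bar>f j\<bar> \<le> c * (1/2::real)^j"
  shows "summable f"
  by (rule summable_comparison_test[where g="\<lambda>j. c * (1/2)^j"]) (use assms in auto)



definition kfun :: "real \<Rightarrow> (nat \<Rightarrow> real) \<Rightarrow> real \<Rightarrow> real" where
  "kfun \<gamma> a t = \<gamma> + (\<Sum>j. 1 - exp (-(a j * t)))"
definition dfun :: "real \<Rightarrow> (nat \<Rightarrow> real) \<Rightarrow> nat \<Rightarrow> real \<Rightarrow> real" where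
  "dfun \<gamma> a n t = (if n = 0 then kfun \<gamma> a t else (-1)^(n-1) * (\<Sum>j. a j ^ n * exp (-(a j * t))))"

lemma term_bound:
  fixes b t :: real
  assumes "0 < b" "t \<ge> 0"
  shows "0 \<le> 1 - exp (-(b*t))" "1 - exp (-(b*t)) \<le> b * t" "1 - exp (-(b*t)) \<le> 1"
proof -
  have "0 \<le> b*t" using assms by simp
  then show "0 \<le> 1 - exp (-(b*t))" by simp
  show "1 - exp (-(b*t)) \<le> b * t" using exp_ge_add_one_self[of "-(b*t)"] by simp
  show "1 - exp (-(b*t)) \<le> 1" by simp
qed

context
  fixes a :: "nat \<Rightarrow> real"
  assumes apos: "\<And>j. 0 < a j" and ale: "\<And>j. a j \<le> (1/2)^j"
begin

lemma a_le1: "a j \<le> 1"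
  using ale[of j] power_le_one[of "1/2::real" j] by simp

lemma summable_k: "t \<ge> 0 \<Longrightarrow> summable (\<lambda>j. 1 - exp (-(a j * t)))"
  apply (rule summable_a_bound[where c=t])
  subgoal for j
  proof -
    assume t: "t \<ge> 0"
    have "a j * t \<le> t * (1/2)^j" using mult_right_mono[OF ale[of j] t] by (simp add: mult.commute)
    then show ?thesis using term_bound[OF apos[of j] t] by simp
  qed
  done

lemma summable_d: "t \<ge> 0 \<Longrightarrow> n > 0 \<Longrightarrow> summable (\<lambda>j. a j ^ n * exp (-(a j * t)))"
proof (rule summable_a_bound[where c=1])
  fix j assume t: "t \<ge> 0" and n: "n > 0"
  have "a j ^ n \<le> a j" using a_le1 apos[of j] n
    using power_decreasing[of 1 n "a j"] by simp
  moreover have "exp (-(a j * t)) \<le> 1" using t apos[of j] by simp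
  ultimately have "a j ^ n * exp (-(a j * t)) \<le> a j"
    by (metis apos exp_gt_zero less_imp_le mult_left_le order_trans zero_le_power)
  then show "\<bar>a j ^ n * exp (-(a j * t))\<bar> \<le> 1 * (1/2)^j" using ale[of j] apos[of j] by simp
qed

lemma smooth: "smooth_on_nonneg (kfun \<gamma> a) (dfun \<gamma> a)"
  unfolding smooth_on_nonneg_def
proof (intro conjI allI impI)
  fix x :: real assume "x \<ge> 0" then show "dfun \<gamma> a 0 x = kfun \<gamma> a x" by (simp add: dfun_def)
next
  fix n and x :: real assume x: "x \<ge> 0"
  show "(dfun \<gamma> a n has_real_derivative dfun \<gamma> a (Suc n) x) (at x within {0..})"
  proof (cases n)
    case 0
    have D: "((\<lambda>x. \<Sum>j. 1 - exp (-(a j * x))) has_real_derivative (\<Sum>j. a j * exp (-(a j * x)))) (at x within {0..})"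
    proof (rule series_deriv[where Mb="\<lambda>j. (1/2)^j"])
      fix j and y :: real assume y: "y \<ge> 0"
      show "((\<lambda>x. 1 - exp (-(a j * x))) has_real_derivative a j * exp (-(a j * y))) (at y within {0..})"
        by (auto intro!: derivative_eq_intros)
      have "0 \<le> a j * y" using y apos[of j] by (simp add: less_imp_le)
      then have "exp (-(a j * y)) \<le> 1" by simp
      then have "a j * exp (-(a j * y)) \<le> a j" using apos[of j]
        using mult_left_le[of "exp (-(a j * y))" "a j"] by simp
      moreover have "\<bar>a j * exp (-(a j * y))\<bar> = a j * exp (-(a j * y))"
        using apos[of j] by (intro abs_of_nonneg) (simp add: less_imp_le)
      ultimately show "\<bar>a j * exp (-(a j * y))\<bar> \<le> (1/2)^j" using ale[of j] by linarith
    qed (use x in auto)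
    have "((\<lambda>x. \<gamma> + (\<Sum>j. 1 - exp (-(a j * x)))) has_real_derivative 0 + (\<Sum>j. a j * exp (-(a j * x)))) (at x within {0..})"
      by (intro DERIV_add DERIV_const D)
    moreover have "dfun \<gamma> a 0 = (\<lambda>x. \<gamma> + (\<Sum>j. 1 - exp (-(a j * x))))"
      by (simp add: fun_eq_iff dfun_def kfun_def)
    ultimately show ?thesis using 0 by (simp add: dfun_def)
  next
    case (Suc m)
    have D: "((\<lambda>x. \<Sum>j. a j ^ Suc m * exp (-(a j * x))) has_real_derivative (\<Sum>j. - (a j ^ Suc (Suc m) * exp (-(a j * x))))) (at x within {0..})"
    proof (rule series_deriv[where Mb="\<lambda>j. (1/2)^j"])
      fix j and y :: real assume y: "y \<ge> 0"
      show "((\<lambda>x. a j ^ Suc m * exp (-(a j * x))) has_real_derivative - (a j ^ Suc (Suc m) * exp (-(a j * y)))) (at y within {0..})"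
        by (auto intro!: derivative_eq_intros)
      have "a j ^ Suc (Suc m) \<le> a j" using a_le1[of j] apos[of j]
        using power_decreasing[of 1 "Suc (Suc m)" "a j"] by simp
      moreover have "exp (-(a j * y)) \<le> 1" using y apos[of j] by simp
      moreover have "0 \<le> a j ^ Suc (Suc m)" using apos[of j] by simp
      ultimately have "a j ^ Suc (Suc m) * exp (-(a j * y)) \<le> a j"
        by (metis exp_gt_zero less_imp_le mult_left_le order_trans)
      moreover have "\<bar>- (a j ^ Suc (Suc m) * exp (-(a j * y)))\<bar> = a j ^ Suc (Suc m) * exp (-(a j * y))"
        using apos[of j] by (simp add: less_imp_le)
      ultimately show "\<bar>- (a j ^ Suc (Suc m) * exp (-(a j * y)))\<bar> \<le> (1/2)^j"
        using ale[of j] by linarith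
    next
      show "summable (\<lambda>j. a j ^ Suc m * exp (-(a j * 0)))" using summable_d[of 0 "Suc m"] by simp
    qed (use x in auto)
    have "(\<Sum>j. - (a j ^ Suc (Suc m) * exp (-(a j * x)))) = - (\<Sum>j. a j ^ Suc (Suc m) * exp (-(a j * x)))"
      using summable_d[OF x, of "Suc (Suc m)"] by (simp add: suminf_minus)
    with D have D': "((\<lambda>x. \<Sum>j. a j ^ Suc m * exp (-(a j * x))) has_real_derivative - (\<Sum>j. a j ^ Suc (Suc m) * exp (-(a j * x)))) (at x within {0..})" by simp
    have "((\<lambda>x. (-1)^m * (\<Sum>j. a j ^ Suc m * exp (-(a j * x)))) has_real_derivative (-1)^m * - (\<Sum>j. a j ^ Suc (Suc m) * exp (-(a j * x)))) (at x within {0..})"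
      by (rule DERIV_cmult[OF D'])
    then show ?thesis using Suc by (simp add: dfun_def[abs_def])
  qed
qed

lemma k0: "kfun \<gamma> a 0 = \<gamma>" by (simp add: kfun_def)

lemma d1pos: "x \<ge> 0 \<Longrightarrow> dfun \<gamma> a 1 x > 0"
  using suminf_pos[OF summable_d[of x 1]] apos by (simp add: dfun_def)

lemma k_nonneg: "\<gamma> > 0 \<Longrightarrow> x \<ge> 0 \<Longrightarrow> kfun \<gamma> a x \<ge> 0"
  unfolding kfun_def using suminf_nonneg[OF summable_k[of x]] term_bound(1)[OF apos] by (simp add: add_nonneg_nonneg)

lemma k_meas: "kfun \<gamma> a \<in> borel_measurable borel"
  unfolding kfun_def[abs_def] by measurable

lemma k_lim: "filterlim (kfun \<gamma> a) at_top at_top"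
proof (subst filterlim_at_top, intro allI)
  fix Z :: real
  obtain N :: nat where N: "real N \<ge> 2 * (Z - \<gamma>)" using real_arch_simple by blast
  have e1: "exp (-1::real) \<le> 1/2"
  proof -
    have "2 \<le> exp (1::real)" using exp_ge_add_one_self[of 1] by simp
    then show ?thesis by (simp add: exp_minus field_simps)
  qed
  show "eventually (\<lambda>t. Z \<le> kfun \<gamma> a t) at_top"
  proof (rule eventually_at_top_linorder[THEN iffD2], intro exI allI impI)
    fix t assume t: "(\<Sum>j<N. 1 / a j) \<le> t"
    have tnn: "t \<ge> 0" using t apos by (smt (verit) sum_nonneg less_imp_le zero_less_divide_1_iff)
    have "\<And>j. j < N \<Longrightarrow> 1/2 \<le> 1 - exp (-(a j * t))"
    proof -
      fix j assume j: "j < N"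
      have "1 / a j \<le> (\<Sum>j<N. 1 / a j)"
        using j apos by (intro member_le_sum) (auto intro: less_imp_le)
      then have "1 / a j \<le> t" using t by simp
      then have "a j * (1 / a j) \<le> a j * t" using apos[of j] by (intro mult_left_mono) auto
      then have "1 \<le> a j * t" using apos[of j] by simp
      then have "exp (-(a j * t)) \<le> exp (-1)" by simp
      then show "1/2 \<le> 1 - exp (-(a j * t))" using e1 by linarith
    qed
    then have "real N / 2 \<le> (\<Sum>j<N. 1 - exp (-(a j * t)))"
      using sum_mono[of "{..<N}" "\<lambda>_. 1/2::real"] by fastforce
    also have "\<dots> \<le> (\<Sum>j. 1 - exp (-(a j * t)))"
      by (rule sum_le_suminf[OF summable_k[OF tnn]]) (use term_bound(1)[OF apos tnn] in auto)
    finally show "Z \<le> kfun \<gamma> a t" unfolding kfun_def using N by simp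
  qed
qed

end


lemma FTC_exp:
  fixes \<gamma> u v :: real
  assumes "\<gamma> > 0" "u \<le> v"
  shows "(\<integral>\<^sup>+t. ennreal (exp (\<gamma> * t)) * indicator {u..v} t \<partial>lborel) = ennreal ((exp (\<gamma> * v) - exp (\<gamma> * u)) / \<gamma>)"
proof -
  have "(\<integral>\<^sup>+t. ennreal (exp (\<gamma> * t)) * indicator {u..v} t \<partial>lborel) = ennreal (exp (\<gamma> * v) / \<gamma> - exp (\<gamma> * u) / \<gamma>)"
    by (rule nn_integral_FTC_Icc[where F="\<lambda>t. exp (\<gamma> * t) / \<gamma>"]) (use assms in \<open>auto intro!: derivative_eq_intros\<close>)
  then show ?thesis by (simp add: diff_divide_distrib)
qed

lemma FTC_gexp:
  fixes \<gamma> x :: real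
  assumes "\<gamma> > 0" "0 \<le> x"
  shows "(\<integral>\<^sup>+t. ennreal (\<gamma> * exp (\<gamma> * t)) * indicator {0..x} t \<partial>lborel) = ennreal (exp (\<gamma> * x) - 1)"
proof -
  have "(\<integral>\<^sup>+t. ennreal (\<gamma> * exp (\<gamma> * t)) * indicator {0..x} t \<partial>lborel) = ennreal (exp (\<gamma> * x) - exp (\<gamma> * 0))"
    by (rule nn_integral_FTC_Icc[where F="\<lambda>t. exp (\<gamma> * t)"]) (use assms in \<open>auto intro!: derivative_eq_intros\<close>)
  then show ?thesis by simp
qed

context
  fixes a s :: "nat \<Rightarrow> real" and \<gamma> :: real
  assumes gpos: "\<gamma> > 0" and snn: "\<And>j. s j \<ge> 0"
    and adef: "\<And>j. a j = 1 / (2^j * (1 + (s j)^2 * exp (\<gamma> * s j)))"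
begin

lemma a_pos: "0 < a j"
  using adef[of j] snn[of j] by (simp add: add_pos_nonneg)

lemma a_le: "a j \<le> (1/2)^j"
proof -
  have "1 \<le> 1 + (s j)^2 * exp (\<gamma> * s j)" by simp
  then have "2^j \<le> 2^j * (1 + (s j)^2 * exp (\<gamma> * s j))" by simp
  then have "1 / (2^j * (1 + (s j)^2 * exp (\<gamma> * s j))) \<le> 1 / 2^j"
    by (intro divide_left_mono) (auto intro!: mult_pos_pos add_pos_nonneg)
  then show ?thesis using adef[of j] by (simp add: power_one_over)
qed

lemma term_int_bound:
  assumes x: "x \<ge> 0"
  shows "(\<integral>\<^sup>+t. ennreal ((1 - exp (-(a j * t))) * exp (\<gamma> * t)) * indicator {0..x} t \<partial>lborel)
     \<le> ennreal ((1/2)^j) + ennreal (exp (\<gamma> * x) / \<gamma>) * indicator {s j<..} x"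
proof (cases "x \<le> s j")
  case True
  define C where "C = a j * s j * exp (\<gamma> * s j)"
  have "(\<integral>\<^sup>+t. ennreal ((1 - exp (-(a j * t))) * exp (\<gamma> * t)) * indicator {0..x} t \<partial>lborel)
       \<le> (\<integral>\<^sup>+t. ennreal C * indicator {0..x} t \<partial>lborel)"
  proof (rule nn_integral_mono)
    fix t
    show "ennreal ((1 - exp (-(a j * t))) * exp (\<gamma> * t)) * indicator {0..x} t \<le> ennreal C * indicator {0..x} t"
    proof (cases "t \<in> {0..x}")
      case tin: True
      then have t0: "0 \<le> t" and tx: "t \<le> s j" using True by auto
      have "1 - exp (-(a j * t)) \<le> a j * t" using term_bound(2)[OF a_pos t0] .
      also have "\<dots> \<le> a j * s j" using tx a_pos[of j] by (simp add: less_imp_le)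
      finally have h1: "1 - exp (-(a j * t)) \<le> a j * s j" .
      have h2: "exp (\<gamma> * t) \<le> exp (\<gamma> * s j)" using tx gpos by simp
      have h0: "0 \<le> 1 - exp (-(a j * t))" using term_bound(1)[OF a_pos t0] .
      have "(1 - exp (-(a j * t))) * exp (\<gamma> * t) \<le> C"
        unfolding C_def using mult_mono[OF h1 h2 _ less_imp_le[OF exp_gt_zero]] a_pos[of j] snn[of j] by simp
      then show ?thesis using tin by (simp add: ennreal_leI)
    qed simp
  qed
  also have "\<dots> = ennreal C * ennreal x" using x by (simp add: nn_integral_cmult_indicator)
  also have "\<dots> = ennreal (C * x)" using x by (simp add: ennreal_mult'')
  also have "\<dots> \<le> ennreal ((1/2)^j)"
  proof (rule ennreal_leI)
    have Cn: "0 \<le> C" unfolding C_def using a_pos[of j] snn[of j] by simp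
    have "C * x \<le> C * s j" using True Cn by (simp add: mult_left_mono)
    also have "\<dots> = (s j)^2 * exp (\<gamma> * s j) / (2^j * (1 + (s j)^2 * exp (\<gamma> * s j)))"
      unfolding C_def adef[of j] by (simp add: power2_eq_square field_simps)
    also have "\<dots> \<le> 1 / 2^j"
      by (simp add: field_simps add_pos_nonneg)
    finally show "C * x \<le> (1/2)^j" by (simp add: power_one_over)
  qed
  also have "\<dots> \<le> ennreal ((1/2)^j) + ennreal (exp (\<gamma> * x) / \<gamma>) * indicator {s j<..} x" by simp
  finally show ?thesis .
next
  case False
  have "(\<integral>\<^sup>+t. ennreal ((1 - exp (-(a j * t))) * exp (\<gamma> * t)) * indicator {0..x} t \<partial>lborel)
       \<le> (\<integral>\<^sup>+t. ennreal (exp (\<gamma> * t)) * indicator {0..x} t \<partial>lborel)"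
  proof (rule nn_integral_mono)
    fix t
    show "ennreal ((1 - exp (-(a j * t))) * exp (\<gamma> * t)) * indicator {0..x} t \<le> ennreal (exp (\<gamma> * t)) * indicator {0..x} t"
    proof (cases "t \<in> {0..x}")
      case tin: True
      then have t0: "0 \<le> t" by auto
      have "(1 - exp (-(a j * t))) * exp (\<gamma> * t) \<le> 1 * exp (\<gamma> * t)"
        by (rule mult_right_mono[OF term_bound(3)[OF a_pos t0]]) simp
      then show ?thesis using tin by (simp add: ennreal_leI)
    qed simp
  qed
  also have "\<dots> = ennreal ((exp (\<gamma> * x) - exp (\<gamma> * 0)) / \<gamma>)" using FTC_exp[OF gpos x] .
  also have "\<dots> \<le> ennreal (exp (\<gamma> * x) / \<gamma>)"
    using gpos by (intro ennreal_leI divide_right_mono) auto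
  also have "\<dots> \<le> ennreal ((1/2)^j) + ennreal (exp (\<gamma> * x) / \<gamma>) * indicator {s j<..} x"
    using False by simp
  finally show ?thesis .
qed

lemma K_bound:
  assumes x: "x \<ge> 0"
  shows "Kfun \<gamma> (kfun \<gamma> a) x \<le> ennreal (exp (\<gamma> * x)) +
           (\<Sum>j. ennreal ((1/2)^j) + ennreal (exp (\<gamma> * x) / \<gamma>) * indicator {s j<..} x)"
proof -
  have eq: "ennreal (kfun \<gamma> a t * exp (\<gamma> * t)) * indicator {0..x} t =
        ennreal (\<gamma> * exp (\<gamma> * t)) * indicator {0..x} t +
        (\<Sum>j. ennreal ((1 - exp (-(a j * t))) * exp (\<gamma> * t)) * indicator {0..x} t)" for t
  proof (cases "t \<in> {0..x}")
    case True
    then have t0: "t \<ge> 0" by auto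
    have sm: "summable (\<lambda>j. (1 - exp (-(a j * t))) * exp (\<gamma> * t))"
      using summable_k[OF a_pos a_le t0] by (rule summable_mult2)
    have "kfun \<gamma> a t * exp (\<gamma> * t) = \<gamma> * exp (\<gamma> * t) + (\<Sum>j. (1 - exp (-(a j * t))) * exp (\<gamma> * t))"
      unfolding kfun_def using suminf_mult2[OF summable_k[OF a_pos a_le t0], of "exp (\<gamma> * t)"]
      by (simp add: distrib_right)
    moreover have "ennreal (\<Sum>j. (1 - exp (-(a j * t))) * exp (\<gamma> * t)) = (\<Sum>j. ennreal ((1 - exp (-(a j * t))) * exp (\<gamma> * t)))"
      by (rule suminf_ennreal2[symmetric, OF _ sm]) (use term_bound(1)[OF a_pos t0] in simp)
    moreover have "0 \<le> (\<Sum>j. (1 - exp (-(a j * t))) * exp (\<gamma> * t))"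
      by (rule suminf_nonneg[OF sm]) (use term_bound(1)[OF a_pos t0] in simp)
    ultimately show ?thesis using True gpos by (simp add: ennreal_plus)
  qed simp
  have "Kfun \<gamma> (kfun \<gamma> a) x = (\<integral>\<^sup>+t. ennreal (kfun \<gamma> a t * exp (\<gamma> * t)) * indicator {0..x} t \<partial>lborel)"
    by (simp add: Kfun_def)
  also have "\<dots> = (\<integral>\<^sup>+t. ennreal (\<gamma> * exp (\<gamma> * t)) * indicator {0..x} t \<partial>lborel) +
        (\<integral>\<^sup>+t. (\<Sum>j. ennreal ((1 - exp (-(a j * t))) * exp (\<gamma> * t)) * indicator {0..x} t) \<partial>lborel)"
    unfolding eq by (rule nn_integral_add) auto
  also have "(\<integral>\<^sup>+t. (\<Sum>j. ennreal ((1 - exp (-(a j * t))) * exp (\<gamma> * t)) * indicator {0..x} t) \<partial>lborel)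
      = (\<Sum>j. \<integral>\<^sup>+t. ennreal ((1 - exp (-(a j * t))) * exp (\<gamma> * t)) * indicator {0..x} t \<partial>lborel)"
    by (rule nn_integral_suminf) auto
  also have "(\<integral>\<^sup>+t. ennreal (\<gamma> * exp (\<gamma> * t)) * indicator {0..x} t \<partial>lborel) = ennreal (exp (\<gamma> * x) - 1)"
    using FTC_gexp[OF gpos x] .
  also have "ennreal (exp (\<gamma> * x) - 1) \<le> ennreal (exp (\<gamma> * x))" by (rule ennreal_leI) simp
  finally show ?thesis
    using suminf_le[OF term_int_bound[OF x] summableI summableI] by (meson add_left_mono order_trans add_right_mono)
qed

end

lemma Kfun_meas: assumes [measurable]: "k \<in> borel_measurable borel"
  shows "Kfun \<gamma> k \<in> borel_measurable borel"
proof -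
  have [measurable]: "Measurable.pred (borel \<Otimes>\<^sub>M borel) (\<lambda>x::real\<times>real. snd x \<in> {0..fst x})"
    unfolding atLeastAtMost_iff by measurable
  show ?thesis
  unfolding Kfun_def[abs_def]
  apply (rule lborel.borel_measurable_nn_integral)
  apply measurable
  done
qed


lemma UI_iff:
  "unif_integrable M ((\<lambda>X \<omega>. exp (\<gamma> * X \<omega>)) ` H) \<longleftrightarrow>
   ((\<lambda>c. SUP X\<in>H. \<integral>\<^sup>+\<omega>. ennreal (exp (\<gamma> * X \<omega>)) * indicator {\<omega>. exp (\<gamma> * X \<omega>) > c} \<omega> \<partial>M) \<longlongrightarrow> 0) at_top"
  by (simp add: unif_integrable_def image_image)

lemma Klower:
  fixes k :: "real \<Rightarrow> real" and \<gamma> Mk T x :: real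
  assumes g: "\<gamma> > 0" and kM: "\<And>t. t \<ge> T \<Longrightarrow> Mk \<le> k t" and T: "T \<ge> 0" and Mk: "Mk \<ge> 0"
    and x: "x \<ge> T + 1"
  shows "ennreal (Mk * ((1 - exp (-\<gamma>)) / \<gamma>) * exp (\<gamma> * x)) \<le> Kfun \<gamma> k x"
proof -
  have "(\<integral>\<^sup>+t. ennreal Mk * (ennreal (exp (\<gamma> * t)) * indicator {x-1..x} t) \<partial>lborel)
      \<le> (\<integral>\<^sup>+t. ennreal (k t * exp (\<gamma> * t)) * indicator {0..x} t \<partial>lborel)"
  proof (rule nn_integral_mono)
    fix t
    show "ennreal Mk * (ennreal (exp (\<gamma> * t)) * indicator {x-1..x} t) \<le> ennreal (k t * exp (\<gamma> * t)) * indicator {0..x} t"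
    proof (cases "t \<in> {x-1..x}")
      case True
      then have "t \<ge> T" "t \<in> {0..x}" using x T by auto
      then have "Mk * exp (\<gamma> * t) \<le> k t * exp (\<gamma> * t)" using kM by (simp add: mult_right_mono)
      then show ?thesis using True \<open>t \<in> {0..x}\<close> Mk by (simp add: ennreal_mult[symmetric] ennreal_leI)
    qed simp
  qed
  moreover have "(\<integral>\<^sup>+t. ennreal Mk * (ennreal (exp (\<gamma> * t)) * indicator {x-1..x} t) \<partial>lborel)
      = ennreal Mk * ennreal ((exp (\<gamma> * x) - exp (\<gamma> * (x-1))) / \<gamma>)"
    by (subst nn_integral_cmult) (auto simp: FTC_exp[OF g])
  moreover have "exp (\<gamma> * (x-1)) = exp (\<gamma> * x) * exp (-\<gamma>)"
    by (simp add: exp_add[symmetric] algebra_simps)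
  then have W: "(exp (\<gamma> * x) - exp (\<gamma> * (x-1))) / \<gamma> = ((1 - exp (-\<gamma>)) / \<gamma>) * exp (\<gamma> * x)"
    by (simp add: field_simps)
  have W0: "0 \<le> ((1 - exp (-\<gamma>)) / \<gamma>) * exp (\<gamma> * x)" using g by simp
  have "ennreal (Mk * ((1 - exp (-\<gamma>)) / \<gamma>) * exp (\<gamma> * x)) = ennreal Mk * ennreal ((exp (\<gamma> * x) - exp (\<gamma> * (x-1))) / \<gamma>)"
    unfolding W using Mk W0 by (simp add: ennreal_mult[symmetric] mult.assoc)
  ultimately show ?thesis by (simp add: Kfun_def)
qed

lemma dirB:
  fixes M :: "'a measure" and H :: "('a \<Rightarrow> real) set" and \<gamma> :: real
  assumes P: "prob_space M" and g: "\<gamma> > 0"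
    and adm: "admissible_k M H \<gamma> k" and meas: "\<And>X. X \<in> H \<Longrightarrow> X \<in> borel_measurable M"
  shows "unif_integrable M ((\<lambda>X \<omega>. exp (\<gamma> * X \<omega>)) ` H)"
proof -
  define B where "B = (SUP X\<in>H. \<integral>\<^sup>+ \<omega>. Kfun \<gamma> k (max (X \<omega>) 0) \<partial>M)"
  have Blt: "B < \<infinity>" and klim: "filterlim k at_top at_top" using adm by (auto simp: admissible_k_def B_def)
  obtain Br where Br: "Br \<ge> 0" "B = ennreal Br" using Blt less_top_ennreal by auto
  define q where "q = (1 - exp (-\<gamma>)) / \<gamma>"
  have km: "k \<in> borel_measurable borel" using adm by (simp add: admissible_k_def)
  have qpos: "q > 0" unfolding q_def using g by simp
  show ?thesis unfolding UI_iff
  proof (rule order_tendstoI)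
    fix a :: ennreal assume "a < 0" then show "eventually (\<lambda>c. a < (SUP X\<in>H. \<integral>\<^sup>+\<omega>. ennreal (exp (\<gamma> * X \<omega>)) * indicator {\<omega>. exp (\<gamma> * X \<omega>) > c} \<omega> \<partial>M)) at_top" by simp
  next
    fix a :: ennreal assume a: "0 < a"
    obtain b where b: "0 < b" "b < a" using dense[OF a] by auto
    have "b < top" using order_less_le_trans[OF b(2) top_greatest] .
    then obtain e where e0: "e \<ge> 0" "b = ennreal e" using less_top_ennreal by auto
    have e: "e > 0" "b = ennreal e" using e0 b(1) by (auto simp: less_le)
    define Mk where "Mk = (Br + 1) / (q * e)"
    have Mk: "Mk > 0" unfolding Mk_def using Br e qpos by simp
    obtain T where T: "\<And>t. t \<ge> T \<Longrightarrow> Mk \<le> k t"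
      using klim unfolding filterlim_at_top eventually_at_top_linorder by blast
    define T' where "T' = max T 0"
    have T': "T' \<ge> 0" "\<And>t. t \<ge> T' \<Longrightarrow> Mk \<le> k t" using T by (auto simp: T'_def)
    show "eventually (\<lambda>c. (SUP X\<in>H. \<integral>\<^sup>+\<omega>. ennreal (exp (\<gamma> * X \<omega>)) * indicator {\<omega>. exp (\<gamma> * X \<omega>) > c} \<omega> \<partial>M) < a) at_top"
    proof (rule eventually_at_top_linorder[THEN iffD2], intro exI allI impI)
      fix c assume c: "exp (\<gamma> * (T' + 1)) \<le> c"
      have "(SUP X\<in>H. \<integral>\<^sup>+\<omega>. ennreal (exp (\<gamma> * X \<omega>)) * indicator {\<omega>. exp (\<gamma> * X \<omega>) > c} \<omega> \<partial>M) \<le> ennreal (1 / (Mk * q)) * B"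
      proof (rule SUP_least)
        fix X assume X: "X \<in> H"
        have "(\<integral>\<^sup>+\<omega>. ennreal (exp (\<gamma> * X \<omega>)) * indicator {\<omega>. exp (\<gamma> * X \<omega>) > c} \<omega> \<partial>M)
            \<le> (\<integral>\<^sup>+\<omega>. ennreal (1 / (Mk * q)) * Kfun \<gamma> k (max (X \<omega>) 0) \<partial>M)"
        proof (rule nn_integral_mono)
          fix \<omega>
          show "ennreal (exp (\<gamma> * X \<omega>)) * indicator {\<omega>. exp (\<gamma> * X \<omega>) > c} \<omega> \<le> ennreal (1 / (Mk * q)) * Kfun \<gamma> k (max (X \<omega>) 0)"
          proof (cases "exp (\<gamma> * X \<omega>) > c")
            case True
            then have "exp (\<gamma> * (T' + 1)) < exp (\<gamma> * X \<omega>)" using c by linarith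
            then have "\<gamma> * (T' + 1) < \<gamma> * X \<omega>" by simp
            then have xT: "X \<omega> \<ge> T' + 1" using g by (simp add: mult_less_cancel_left_pos less_imp_le)
            then have mx: "max (X \<omega>) 0 = X \<omega>" using T' by simp
            have L: "ennreal (Mk * q * exp (\<gamma> * X \<omega>)) \<le> Kfun \<gamma> k (X \<omega>)"
              using Klower[OF g T'(2) T'(1) less_imp_le[OF Mk] xT] unfolding q_def by simp
            have "ennreal (exp (\<gamma> * X \<omega>)) = ennreal (1 / (Mk * q)) * ennreal (Mk * q * exp (\<gamma> * X \<omega>))"
              using Mk qpos by (simp add: ennreal_mult[symmetric])
            also have "\<dots> \<le> ennreal (1 / (Mk * q)) * Kfun \<gamma> k (X \<omega>)" using L by (rule mult_left_mono) simp
            finally show ?thesis using True mx by simp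
          qed simp
        qed
        also have "\<dots> = ennreal (1 / (Mk * q)) * (\<integral>\<^sup>+\<omega>. Kfun \<gamma> k (max (X \<omega>) 0) \<partial>M)"
          using X measurable_compose[OF _ Kfun_meas[OF km], of "\<lambda>\<omega>. max (X \<omega>) 0" M] meas[OF X]
          by (intro nn_integral_cmult) auto
        also have "\<dots> \<le> ennreal (1 / (Mk * q)) * B"
          unfolding B_def by (rule mult_left_mono) (use X in \<open>auto intro: SUP_upper\<close>)
        finally show "(\<integral>\<^sup>+\<omega>. ennreal (exp (\<gamma> * X \<omega>)) * indicator {\<omega>. exp (\<gamma> * X \<omega>) > c} \<omega> \<partial>M) \<le> ennreal (1 / (Mk * q)) * B" .
      qed
      also have "\<dots> = ennreal (Br / (Mk * q))" using Br Mk qpos by (simp add: ennreal_mult[symmetric])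
      also have "\<dots> < ennreal e"
      proof (subst ennreal_less_iff)
        show "0 \<le> Br / (Mk * q)" using Br Mk qpos by simp
        have "Mk * q = (Br + 1) / e" unfolding Mk_def using qpos e Br by (simp add: field_simps)
        then have "Br / (Mk * q) = Br * e / (Br + 1)" by simp
        also have "\<dots> < e" using e Br by (simp add: field_simps)
        finally show "Br / (Mk * q) < e" .
      qed
      finally show "(SUP X\<in>H. \<integral>\<^sup>+\<omega>. ennreal (exp (\<gamma> * X \<omega>)) * indicator {\<omega>. exp (\<gamma> * X \<omega>) > c} \<omega> \<partial>M) < a"
        using b e by simp
    qed
  qed
qed



lemma dirA:
  fixes M :: "'a measure" and H :: "('a \<Rightarrow> real) set" and \<gamma> :: real
  assumes P: "prob_space M" and g: "\<gamma> > 0"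
    and meas: "\<And>X. X \<in> H \<Longrightarrow> X \<in> borel_measurable M"
    and UI: "unif_integrable M ((\<lambda>X \<omega>. exp (\<gamma> * X \<omega>)) ` H)"
  shows "\<exists>k d. admissible_k M H \<gamma> k \<and> smooth_on_nonneg k d \<and> k 0 = \<gamma> \<and> (\<forall>x\<ge>0. d 1 x > 0)"
proof -
  define Tail where "Tail c = (SUP X\<in>H. \<integral>\<^sup>+\<omega>. ennreal (exp (\<gamma> * X \<omega>)) * indicator {\<omega>. exp (\<gamma> * X \<omega>) > c} \<omega> \<partial>M)" for c
  have lim: "(Tail \<longlongrightarrow> 0) at_top" using UI unfolding UI_iff Tail_def[abs_def] .
  have TailX: "(\<integral>\<^sup>+\<omega>. ennreal (exp (\<gamma> * X \<omega>)) * indicator {\<omega>. exp (\<gamma> * X \<omega>) > c} \<omega> \<partial>M) \<le> Tail c"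
    if "X \<in> H" for X c unfolding Tail_def using that by (rule SUP_upper)
  have "\<forall>j. \<exists>c. c \<ge> 1 \<and> Tail c < ennreal ((1/2)^j)"
  proof
    fix j :: nat
    have "eventually (\<lambda>c. Tail c < ennreal ((1/2)^j)) at_top"
      by (rule order_tendstoD(2)[OF lim]) simp
    then obtain N where N: "\<And>c. c \<ge> N \<Longrightarrow> Tail c < ennreal ((1/2)^j)"
      unfolding eventually_at_top_linorder by blast
    show "\<exists>c. c \<ge> 1 \<and> Tail c < ennreal ((1/2)^j)"
      by (rule exI[of _ "max N 1"]) (auto intro: N)
  qed
  then obtain cc where cc: "\<And>j. cc j \<ge> 1" "\<And>j. Tail (cc j) < ennreal ((1/2)^j)" by metis
  define s where "s j = ln (cc j) / \<gamma>" for j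
  have snn: "\<And>j. s j \<ge> 0" unfolding s_def using cc(1) g by simp
  have es: "exp (\<gamma> * s j) = cc j" for j unfolding s_def using cc(1)[of j] g
    by (simp add: order_less_le_trans[OF zero_less_one])
  define a where "a j = 1 / (2^j * (1 + (s j)^2 * exp (\<gamma> * s j)))" for j
  have adef: "\<And>j. a j = 1 / (2^j * (1 + (s j)^2 * exp (\<gamma> * s j)))" by (simp add: a_def)
  note ap = a_pos[OF g snn adef] and al = a_le[OF g snn adef]
  define Cst where "Cst = ennreal (cc 0 + 2) + ennreal ((1 + 1/\<gamma>) * 2)"
  have PS: "emeasure M (space M) = 1" using P by (simp add: prob_space.emeasure_space_1)
  have bound: "(\<integral>\<^sup>+ \<omega>. Kfun \<gamma> (kfun \<gamma> a) (max (X \<omega>) 0) \<partial>M) \<le> Cst" if X: "X \<in> H" for X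
  proof -
    have [measurable]: "X \<in> borel_measurable M" using meas[OF X] .
    have "(\<integral>\<^sup>+ \<omega>. Kfun \<gamma> (kfun \<gamma> a) (max (X \<omega>) 0) \<partial>M) \<le>
      (\<integral>\<^sup>+ \<omega>. ennreal (exp (\<gamma> * max (X \<omega>) 0)) +
           (\<Sum>j. ennreal ((1/2)^j) + ennreal (exp (\<gamma> * max (X \<omega>) 0) / \<gamma>) * indicator {s j<..} (max (X \<omega>) 0)) \<partial>M)"
      by (rule nn_integral_mono) (rule K_bound[OF g snn adef], simp)
    also have "\<dots> = (\<integral>\<^sup>+ \<omega>. ennreal (exp (\<gamma> * max (X \<omega>) 0)) \<partial>M) +
        (\<Sum>j. \<integral>\<^sup>+ \<omega>. ennreal ((1/2)^j) + ennreal (exp (\<gamma> * max (X \<omega>) 0) / \<gamma>) * indicator {s j<..} (max (X \<omega>) 0) \<partial>M)"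
      by (subst nn_integral_add) (auto intro!: nn_integral_suminf)
    also have "(\<integral>\<^sup>+ \<omega>. ennreal (exp (\<gamma> * max (X \<omega>) 0)) \<partial>M) \<le> ennreal (cc 0 + 2)"
    proof -
      have "(\<integral>\<^sup>+ \<omega>. ennreal (exp (\<gamma> * max (X \<omega>) 0)) \<partial>M) \<le>
          (\<integral>\<^sup>+ \<omega>. ennreal (1 + cc 0) + ennreal (exp (\<gamma> * X \<omega>)) * indicator {\<omega>. exp (\<gamma> * X \<omega>) > cc 0} \<omega> \<partial>M)"
      proof (rule nn_integral_mono)
        fix \<omega>
        have "exp (\<gamma> * max (X \<omega>) 0) \<le> 1 + cc 0 + (if exp (\<gamma> * X \<omega>) > cc 0 then exp (\<gamma> * X \<omega>) else 0)"
          using cc(1)[of 0] g by (cases "X \<omega> \<ge> 0") (auto simp: max_def)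
        then show "ennreal (exp (\<gamma> * max (X \<omega>) 0)) \<le> ennreal (1 + cc 0) + ennreal (exp (\<gamma> * X \<omega>)) * indicator {\<omega>. exp (\<gamma> * X \<omega>) > cc 0} \<omega>"
          using cc(1)[of 0] by (cases "exp (\<gamma> * X \<omega>) > cc 0") (auto simp del: ennreal_plus simp add: ennreal_plus[symmetric] ennreal_leI)
      qed
      also have "\<dots> = ennreal (1 + cc 0) + (\<integral>\<^sup>+ \<omega>. ennreal (exp (\<gamma> * X \<omega>)) * indicator {\<omega>. exp (\<gamma> * X \<omega>) > cc 0} \<omega> \<partial>M)"
        by (subst nn_integral_add) (auto simp: PS)
      also have "\<dots> \<le> ennreal (1 + cc 0) + ennreal 1"
        using TailX[OF X, of "cc 0"] cc(2)[of 0] by (intro add_left_mono) simp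
      also have "\<dots> = ennreal (cc 0 + 2)"
      proof -
        have "ennreal ((1 + cc 0) + 1) = ennreal (1 + cc 0) + ennreal 1"
          using cc(1)[of 0] by (intro ennreal_plus) auto
        then show ?thesis by (simp add: add.commute add.left_commute)
      qed
      finally show ?thesis .
    qed
    also have "(\<Sum>j. \<integral>\<^sup>+ \<omega>. ennreal ((1/2)^j) + ennreal (exp (\<gamma> * max (X \<omega>) 0) / \<gamma>) * indicator {s j<..} (max (X \<omega>) 0) \<partial>M)
        \<le> (\<Sum>j. ennreal ((1 + 1/\<gamma>) * (1/2)^j))"
    proof (rule suminf_le[OF _ summableI summableI])
      fix j
      have "(\<integral>\<^sup>+ \<omega>. ennreal (exp (\<gamma> * max (X \<omega>) 0) / \<gamma>) * indicator {s j<..} (max (X \<omega>) 0) \<partial>M)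
          \<le> (\<integral>\<^sup>+ \<omega>. ennreal (1/\<gamma>) * (ennreal (exp (\<gamma> * X \<omega>)) * indicator {\<omega>. exp (\<gamma> * X \<omega>) > cc j} \<omega>) \<partial>M)"
      proof (rule nn_integral_mono)
        fix \<omega>
        show "ennreal (exp (\<gamma> * max (X \<omega>) 0) / \<gamma>) * indicator {s j<..} (max (X \<omega>) 0)
            \<le> ennreal (1/\<gamma>) * (ennreal (exp (\<gamma> * X \<omega>)) * indicator {\<omega>. exp (\<gamma> * X \<omega>) > cc j} \<omega>)"
        proof (cases "max (X \<omega>) 0 > s j")
          case True
          then have Xs: "X \<omega> > s j" and mx: "max (X \<omega>) 0 = X \<omega>" using snn[of j] by (auto simp: max_def split: if_splits)
          have "exp (\<gamma> * s j) < exp (\<gamma> * X \<omega>)" using Xs g by simp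
          then have "exp (\<gamma> * X \<omega>) > cc j" using es by simp
          then show ?thesis using True mx g by (simp add: ennreal_mult[symmetric] divide_inverse mult.commute)
        qed simp
      qed
      also have "\<dots> = ennreal (1/\<gamma>) * (\<integral>\<^sup>+ \<omega>. ennreal (exp (\<gamma> * X \<omega>)) * indicator {\<omega>. exp (\<gamma> * X \<omega>) > cc j} \<omega> \<partial>M)"
        by (rule nn_integral_cmult) measurable
      also have "\<dots> \<le> ennreal (1/\<gamma>) * ennreal ((1/2)^j)"
        using TailX[OF X, of "cc j"] cc(2)[of j] by (intro mult_left_mono) auto
      finally have h: "(\<integral>\<^sup>+ \<omega>. ennreal (exp (\<gamma> * max (X \<omega>) 0) / \<gamma>) * indicator {s j<..} (max (X \<omega>) 0) \<partial>M)
          \<le> ennreal (1/\<gamma>) * ennreal ((1/2)^j)" .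
      have "(\<integral>\<^sup>+ \<omega>. ennreal ((1/2)^j) + ennreal (exp (\<gamma> * max (X \<omega>) 0) / \<gamma>) * indicator {s j<..} (max (X \<omega>) 0) \<partial>M)
          = ennreal ((1/2)^j) + (\<integral>\<^sup>+ \<omega>. ennreal (exp (\<gamma> * max (X \<omega>) 0) / \<gamma>) * indicator {s j<..} (max (X \<omega>) 0) \<partial>M)"
        by (subst nn_integral_add) (auto simp: PS)
      also have "\<dots> \<le> ennreal ((1/2)^j) + ennreal (1/\<gamma>) * ennreal ((1/2)^j)"
        using h by (rule add_left_mono)
      also have "\<dots> = ennreal ((1 + 1/\<gamma>) * (1/2)^j)"
        using g by (simp add: ennreal_mult[symmetric] distrib_right flip: ennreal_plus)
      finally show "(\<integral>\<^sup>+ \<omega>. ennreal ((1/2)^j) + ennreal (exp (\<gamma> * max (X \<omega>) 0) / \<gamma>) * indicator {s j<..} (max (X \<omega>) 0) \<partial>M)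
          \<le> ennreal ((1 + 1/\<gamma>) * (1/2)^j)" .
    qed
    also have "(\<Sum>j. ennreal ((1 + 1/\<gamma>) * (1/2)^j)) = ennreal ((1 + 1/\<gamma>) * 2)"
    proof -
      have sm: "summable (\<lambda>j. (1 + 1/\<gamma>) * (1/2::real)^j)" by (intro summable_mult) simp
      have "(\<Sum>j. (1 + 1/\<gamma>) * (1/2::real)^j) = (1 + 1/\<gamma>) * 2"
        by (subst suminf_mult) (simp_all add: suminf_geometric)
      then show ?thesis using g by (subst suminf_ennreal2[OF _ sm]) auto
    qed
    finally show ?thesis unfolding Cst_def by (simp add: add_mono)
  qed
  have "(SUP X\<in>H. \<integral>\<^sup>+ \<omega>. Kfun \<gamma> (kfun \<gamma> a) (max (X \<omega>) 0) \<partial>M) \<le> Cst"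
    by (rule SUP_least) (rule bound)
  also have "Cst < \<infinity>" unfolding Cst_def by simp
  finally have fin: "(SUP X\<in>H. \<integral>\<^sup>+ \<omega>. Kfun \<gamma> (kfun \<gamma> a) (max (X \<omega>) 0) \<partial>M) < \<infinity>" .
  have "admissible_k M H \<gamma> (kfun \<gamma> a)"
    unfolding admissible_k_def
    using k_meas[OF ap al] k_nonneg[OF ap al g] k_lim[OF ap al] fin by auto
  moreover note smooth[OF ap al, of \<gamma>] k0[OF ap al, of \<gamma>] d1pos[OF ap al, of _ \<gamma>]
  ultimately show ?thesis by blast
qed


theorem lemma3p2:
  fixes M :: "'a measure" and H :: "('a \<Rightarrow> real) set" and \<gamma> :: real
  assumes "prob_space M"
    and "\<gamma> > 0"
    and "\<And>X. X \<in> H \<Longrightarrow> X \<in> borel_measurable M"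
  shows "(unif_integrable M ((\<lambda>X \<omega>. exp (\<gamma> * X \<omega>)) ` H) \<longleftrightarrow> (\<exists>k. admissible_k M H \<gamma> k))
    \<and> (unif_integrable M ((\<lambda>X \<omega>. exp (\<gamma> * X \<omega>)) ` H) \<longrightarrow>
         (\<exists>k d. admissible_k M H \<gamma> k \<and> smooth_on_nonneg k d \<and> k 0 = \<gamma>
                \<and> (\<forall>x\<ge>0. d 1 x > 0)))"
  using dirA[OF assms] dirB[OF assms(1,2) _ assms(3)] by blast

end
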